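(* Let $\beta<0,\gamma>0$, let $N\in2^{\mathbb{Z}}$ with $N\ge a$, and let $$K(x,t)=\int_{\mathbb{R}}e^{-it\phi(\xi)+ix\xi}\chi_{[N,4N]}(|\xi|)\,d\xi.$$ Then for every $p\ge7$, $$\|K\|_{L^{p/2}_xL^\infty_t}\le C N^{\frac{p-2}{p}},$$ with $C$ independent of $N$.
   Context: $\phi(\xi)=\beta\xi^3+\frac{\gamma}{\xi}$. $A=\max\{1,|\frac{6\gamma}{7\beta}|^{1/4},|\frac{\gamma}{3\beta}|^{1/2},|\frac{\gamma}{\beta}|,100|\beta|,100|\gamma|\}$ and $a=2^{[A]}$, $[A]$ the integer part. $\|f\|_{L^p_xL^q_t}=\big(\int(\int|f|^qdt)^{p/q}dx\big)^{1/p}$; $\chi_E$ is the indicator function of $E$. *)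

theory Defs
  imports "HOL-Analysis.Analysis" "HOL-Probability.Essential_Supremum"
begin

definition phase :: "real \<Rightarrow> real \<Rightarrow> real \<Rightarrow> real" where
  "phase \<beta> \<gamma> \<xi> = \<beta> * \<xi>^3 + \<gamma> / \<xi>"

definition A_const :: "real \<Rightarrow> real \<Rightarrow> real" where
  "A_const \<beta> \<gamma> = Max {1, \<bar>6*\<gamma> / (7*\<beta>)\<bar> powr (1/4), \<bar>\<gamma> / (3*\<beta>)\<bar> powr (1/2),
                       \<bar>\<gamma> / \<beta>\<bar>, 100*\<bar>\<beta>\<bar>, 100*\<bar>\<gamma>\<bar>}"

definition a_const :: "real \<Rightarrow> real \<Rightarrow> real" where
  "a_const \<beta> \<gamma> = 2 powr (real_of_int \<lfloor>A_const \<beta> \<gamma>\<rfloor>)"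

definition kernelK :: "real \<Rightarrow> real \<Rightarrow> real \<Rightarrow> real \<Rightarrow> real \<Rightarrow> complex" where
  "kernelK \<beta> \<gamma> N x t = (LINT \<xi>|lborel.
     indicator {\<xi>. N \<le> \<bar>\<xi>\<bar> \<and> \<bar>\<xi>\<bar> \<le> 4*N} \<xi> *\<^sub>R
       exp (- \<i> * complex_of_real (t * phase \<beta> \<gamma> \<xi>) + \<i> * complex_of_real (x * \<xi>)))"

definition Linf_t :: "(real \<Rightarrow> real \<Rightarrow> complex) \<Rightarrow> real \<Rightarrow> ereal" where
  "Linf_t f x = esssup lborel (\<lambda>t. ereal (cmod (f x t)))"

definition norm_Lr_Linf :: "real \<Rightarrow> (real \<Rightarrow> real \<Rightarrow> complex) \<Rightarrow> ereal" where
  "norm_Lr_Linf r f =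
     (if (AE x in lborel. Linf_t f x < \<infinity>) \<and>
         (\<integral>\<^sup>+ x. ennreal (real_of_ereal (Linf_t f x) powr r) \<partial>lborel) < \<infinity>
      then ereal ((enn2real (\<integral>\<^sup>+ x. ennreal (real_of_ereal (Linf_t f x) powr r) \<partial>lborel)) powr (1/r))
      else \<infinity>)"

end

theory Submission
  imports Defs
begin


lemma cis_vd:
  assumes "(\<psi> has_real_derivative d) (at x within S)"
  shows "((\<lambda>x. cis (\<psi> x)) has_vector_derivative (of_real d * (\<i> * cis (\<psi> x)))) (at x within S)"
proof -
  have "(\<psi> has_derivative (*) d) (at x within S)" using assms by (simp add: has_field_derivative_def)
  from has_derivative_cis[OF this] show ?thesis
    unfolding has_vector_derivative_def
    by (simp add: scaleR_conv_of_real mult.commute mult.left_commute)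
qed

lemma dF_aux:
  fixes \<psi>' \<psi>'' :: real and c :: complex
  assumes "\<psi>' \<noteq> 0"
  shows "c * (\<i> * of_real (\<psi>'' / \<psi>'^2)) + (of_real \<psi>' * (\<i> * c)) * (\<i> * of_real (- 1 / \<psi>'))
     = c + c * (\<i> * of_real (\<psi>'' / \<psi>'^2))"
proof -
  have "(of_real \<psi>' * (\<i> * c)) * (\<i> * of_real (- 1 / \<psi>')) = c * (of_real \<psi>' * of_real (1/\<psi>'))"
    by (simp add: algebra_simps)
  also have "of_real \<psi>' * of_real (1/\<psi>') = (1::complex)"
    using assms by (simp flip: of_real_mult)
  finally show ?thesis by simp
qed

lemma dinv:
  fixes f :: "real \<Rightarrow> real"
  assumes "(f has_real_derivative d) (at x)" "f x \<noteq> 0"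
  shows "((\<lambda>x. - 1 / f x) has_real_derivative (d / (f x)^2)) (at x within S)"
proof -
  have "((\<lambda>x. inverse (f x)) has_real_derivative (- (d * inverse (f x ^ Suc (Suc 0))))) (at x)"
    using DERIV_inverse_fun[OF assms] .
  then have "((\<lambda>x. - inverse (f x)) has_real_derivative (d * inverse (f x ^ Suc (Suc 0)))) (at x)"
    using DERIV_minus by fastforce
  then have "((\<lambda>x. - 1 / f x) has_real_derivative (d / (f x)^2)) (at x)"
    by (simp add: divide_inverse power2_eq_square)
  then show ?thesis by (rule has_field_derivative_at_within)
qed

lemma vdc1:
  fixes \<psi> \<psi>' \<psi>'' :: "real \<Rightarrow> real" and a b l :: real
  assumes ab: "a \<le> b" and l: "l > 0"
    and d1: "\<And>\<xi>. \<xi> \<in> {a..b} \<Longrightarrow> (\<psi> has_real_derivative \<psi>' \<xi>) (at \<xi>)"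
    and d2: "\<And>\<xi>. \<xi> \<in> {a..b} \<Longrightarrow> (\<psi>' has_real_derivative \<psi>'' \<xi>) (at \<xi>)"
    and c2: "continuous_on {a..b} \<psi>''"
    and pos: "\<And>\<xi>. \<xi> \<in> {a..b} \<Longrightarrow> \<psi>'' \<xi> \<ge> 0"
    and big: "\<And>\<xi>. \<xi> \<in> {a..b} \<Longrightarrow> \<bar>\<psi>' \<xi>\<bar> \<ge> l"
  shows "norm (integral {a..b} (\<lambda>\<xi>. cis (\<psi> \<xi>))) \<le> 4 / l"
proof -
  have nz: "\<psi>' \<xi> \<noteq> 0" if "\<xi> \<in> {a..b}" for \<xi> using big[OF that] l by auto
  define F where "F \<xi> = cis (\<psi> \<xi>) * (\<i> * of_real (- 1 / \<psi>' \<xi>))" for \<xi>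
  define G where "G \<xi> = cis (\<psi> \<xi>) * (\<i> * of_real (\<psi>'' \<xi> / (\<psi>' \<xi>)^2))" for \<xi>
  have c1: "continuous_on {a..b} \<psi>'"
    using d2 by (meson DERIV_isCont continuous_at_imp_continuous_on)
  have c0: "continuous_on {a..b} \<psi>"
    using d1 by (meson DERIV_isCont continuous_at_imp_continuous_on)
  have dF: "(F has_vector_derivative (cis (\<psi> \<xi>) + G \<xi>)) (at \<xi> within {a..b})" if "\<xi> \<in> {a..b}" for \<xi>
  proof -
    have e1: "((\<lambda>x. - 1 / \<psi>' x) has_real_derivative (\<psi>'' \<xi> / (\<psi>' \<xi>)^2)) (at \<xi> within {a..b})"
      using dinv[OF d2[OF that] nz[OF that]] .
    have e2: "((\<lambda>x. \<i> * of_real (- 1 / \<psi>' x)) has_vector_derivative (\<i> * of_real (\<psi>'' \<xi> / (\<psi>' \<xi>)^2))) (at \<xi> within {a..b})"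
      using has_vector_derivative_mult[OF has_vector_derivative_const has_vector_derivative_of_real[OF e1], of \<i>]
      by simp
    have "(F has_vector_derivative (cis (\<psi> \<xi>) * (\<i> * of_real (\<psi>'' \<xi> / (\<psi>' \<xi>)^2)) + (of_real (\<psi>' \<xi>) * (\<i> * cis (\<psi> \<xi>))) * (\<i> * of_real (- 1 / \<psi>' \<xi>)))) (at \<xi> within {a..b})"
      unfolding F_def
      by (rule has_vector_derivative_mult[OF cis_vd[OF has_field_derivative_at_within[OF d1[OF that]]] e2])
    then show ?thesis unfolding G_def dF_aux[OF nz[OF that]] .
  qed
  have ftc: "((\<lambda>\<xi>. cis (\<psi> \<xi>) + G \<xi>) has_integral (F b - F a)) {a..b}"
    using fundamental_theorem_of_calculus[OF ab dF] by simp
  have cG: "continuous_on {a..b} G"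
    unfolding G_def using nz c0 c1 c2 by (auto intro!: continuous_intros)
  have iG: "G integrable_on {a..b}" using cG integrable_continuous_real by blast
  have ic: "(\<lambda>\<xi>. cis (\<psi> \<xi>)) integrable_on {a..b}"
    using c0 by (auto intro!: integrable_continuous_real continuous_intros)
  have eq: "integral {a..b} (\<lambda>\<xi>. cis (\<psi> \<xi>)) = (F b - F a) - integral {a..b} G"
    using integral_add[OF ic iG] ftc by (simp add: integral_unique)
  define H where "H \<xi> = - 1 / \<psi>' \<xi>" for \<xi>
  have dH: "(H has_vector_derivative (\<psi>'' \<xi> / (\<psi>' \<xi>)^2)) (at \<xi> within {a..b})" if "\<xi> \<in> {a..b}" for \<xi>
    unfolding H_def has_real_derivative_iff_has_vector_derivative[symmetric]
    using dinv[OF d2[OF that] nz[OF that]] .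
  have ftc2: "((\<lambda>\<xi>. \<psi>'' \<xi> / (\<psi>' \<xi>)^2) has_integral (H b - H a)) {a..b}"
    using fundamental_theorem_of_calculus[OF ab dH] by simp
  have "norm (integral {a..b} G) \<le> integral {a..b} (\<lambda>\<xi>. \<psi>'' \<xi> / (\<psi>' \<xi>)^2)"
    apply (rule integral_norm_bound_integral[OF iG])
    using ftc2 apply blast
  proof -
    fix x assume x: "x \<in> {a..b}"
    have "norm (G x) = \<bar>\<psi>'' x / (\<psi>' x)^2\<bar>" unfolding G_def by (simp only: norm_mult norm_cis norm_ii norm_of_real mult_1_left)
    then show "norm (G x) \<le> \<psi>'' x / (\<psi>' x)^2" using pos[OF x] by simp
  qed
  also have "\<dots> = H b - H a" using ftc2 by (simp add: integral_unique)
  also have "\<dots> \<le> 2 / l"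
  proof -
    have "\<bar>H \<xi>\<bar> \<le> 1 / l" if "\<xi> \<in> {a..b}" for \<xi>
    proof -
      have "\<bar>H \<xi>\<bar> = 1 / \<bar>\<psi>' \<xi>\<bar>" unfolding H_def by simp
      also have "\<dots> \<le> 1 / l" using big[OF that] l by (simp add: frac_le)
      finally show ?thesis .
    qed
    then have "\<bar>H a\<bar> \<le> 1 / l" "\<bar>H b\<bar> \<le> 1 / l" using ab by auto
    then show ?thesis by linarith
  qed
  finally have g: "norm (integral {a..b} G) \<le> 2 / l" .
  have "norm (F \<xi>) \<le> 1 / l" if "\<xi> \<in> {a..b}" for \<xi>
  proof -
    have "norm (F \<xi>) = \<bar>- 1 / \<psi>' \<xi>\<bar>" unfolding F_def by (simp only: norm_mult norm_cis norm_ii norm_of_real mult_1_left)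
    also have "\<dots> = 1 / \<bar>\<psi>' \<xi>\<bar>" by simp
    also have "\<dots> \<le> 1 / l" using big[OF that] l by (simp add: frac_le)
    finally show ?thesis .
  qed
  then have "norm (F a) \<le> 1 / l" "norm (F b) \<le> 1 / l" using ab by auto
  then have "norm (F b - F a) \<le> 2 / l"
    using norm_triangle_ineq4[of "F b" "F a"] by linarith
  then show ?thesis unfolding eq using g norm_triangle_ineq4[of "F b - F a" "integral {a..b} G"] by linarith
qed

lemma norm_integral_cis_neg:
  "norm (integral {a..b} (\<lambda>\<xi>. cis (- \<psi> \<xi>))) = norm (integral {a..b} (\<lambda>\<xi>. cis (\<psi> \<xi>)))"
proof -
  have "integral {a..b} (\<lambda>\<xi>. cis (- \<psi> \<xi>)) = cnj (integral {a..b} (\<lambda>\<xi>. cis (\<psi> \<xi>)))"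
    by (simp add: integral_cnj cis_cnj)
  then show ?thesis by simp
qed

lemma vdc1g:
  fixes \<psi> \<psi>' \<psi>'' :: "real \<Rightarrow> real" and a b l :: real
  assumes ab: "a \<le> b" and l: "l > 0"
    and d1: "\<And>\<xi>. \<xi> \<in> {a..b} \<Longrightarrow> (\<psi> has_real_derivative \<psi>' \<xi>) (at \<xi>)"
    and d2: "\<And>\<xi>. \<xi> \<in> {a..b} \<Longrightarrow> (\<psi>' has_real_derivative \<psi>'' \<xi>) (at \<xi>)"
    and c2: "continuous_on {a..b} \<psi>''"
    and sgn: "(\<forall>\<xi>\<in>{a..b}. \<psi>'' \<xi> \<ge> 0) \<or> (\<forall>\<xi>\<in>{a..b}. \<psi>'' \<xi> \<le> 0)"
    and big: "\<And>\<xi>. \<xi> \<in> {a..b} \<Longrightarrow> \<bar>\<psi>' \<xi>\<bar> \<ge> l"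
  shows "norm (integral {a..b} (\<lambda>\<xi>. cis (\<psi> \<xi>))) \<le> 4 / l"
  using sgn
proof
  assume "\<forall>\<xi>\<in>{a..b}. \<psi>'' \<xi> \<ge> 0"
  then show ?thesis using vdc1[OF ab l d1 d2 c2 _ big] by blast
next
  assume n: "\<forall>\<xi>\<in>{a..b}. \<psi>'' \<xi> \<le> 0"
  have "norm (integral {a..b} (\<lambda>\<xi>. cis (- \<psi> \<xi>))) \<le> 4 / l"
    apply (rule vdc1[OF ab l, where \<psi>'="\<lambda>\<xi>. - \<psi>' \<xi>" and \<psi>''="\<lambda>\<xi>. - \<psi>'' \<xi>"])
    using d1 d2 c2 n big by (auto intro!: derivative_intros continuous_intros)
  then show ?thesis by (simp only: norm_integral_cis_neg)
qed

lemma trivial_bound: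
  fixes \<psi> :: "real \<Rightarrow> real"
  assumes "a \<le> b" "continuous_on {a..b} \<psi>"
  shows "norm (integral {a..b} (\<lambda>\<xi>. cis (\<psi> \<xi>))) \<le> b - a"
proof -
  have "norm (integral {a..b} (\<lambda>\<xi>. cis (\<psi> \<xi>))) \<le> integral {a..b} (\<lambda>\<xi>. 1::real)"
    apply (rule integral_norm_bound_integral)
    using assms by (auto intro!: integrable_continuous_real continuous_intros)
  then show ?thesis using assms by simp
qed

lemma mvt_low:
  fixes \<psi>' \<psi>'' :: "real \<Rightarrow> real"
  assumes d2: "\<And>\<xi>. \<xi> \<in> {a..b} \<Longrightarrow> (\<psi>' has_real_derivative \<psi>'' \<xi>) (at \<xi>)"
    and mu: "\<And>\<xi>. \<xi> \<in> {a..b} \<Longrightarrow> \<psi>'' \<xi> \<ge> \<mu>"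
    and x: "a \<le> x" "x \<le> y" "y \<le> b"
  shows "\<psi>' y - \<psi>' x \<ge> \<mu> * (y - x)"
proof (cases "x = y")
  case True then show ?thesis by simp
next
  case False
  then have "x < y" using x by simp
  from MVT2[OF this, of \<psi>' \<psi>''] d2 x obtain z where z: "x < z" "z < y" "\<psi>' y - \<psi>' x = (y - x) * \<psi>'' z"
    by force
  have "\<psi>'' z \<ge> \<mu>" using mu z x by auto
  then show ?thesis using z \<open>x < y\<close> by (simp add: mult.commute mult_right_mono)
qed

lemma vdc2a:
  fixes \<psi> \<psi>' \<psi>'' :: "real \<Rightarrow> real"
  assumes ab: "a \<le> b" and mu: "\<mu> > 0" and de: "\<delta> > 0"
    and d1: "\<And>\<xi>. \<xi> \<in> {a..b} \<Longrightarrow> (\<psi> has_real_derivative \<psi>' \<xi>) (at \<xi>)"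
    and d2: "\<And>\<xi>. \<xi> \<in> {a..b} \<Longrightarrow> (\<psi>' has_real_derivative \<psi>'' \<xi>) (at \<xi>)"
    and c2: "continuous_on {a..b} \<psi>''"
    and pos: "\<And>\<xi>. \<xi> \<in> {a..b} \<Longrightarrow> \<psi>'' \<xi> \<ge> \<mu>"
    and start: "\<psi>' a \<ge> 0"
  shows "norm (integral {a..b} (\<lambda>\<xi>. cis (\<psi> \<xi>))) \<le> \<delta> / \<mu> + 4 / \<delta>"
proof -
  define m where "m = min b (a + \<delta> / \<mu>)"
  have am: "a \<le> m" "m \<le> b" unfolding m_def using ab mu de by auto
  have c0: "continuous_on {a..b} \<psi>"
    using d1 by (meson DERIV_isCont continuous_at_imp_continuous_on)
  have split: "integral {a..m} (\<lambda>\<xi>. cis (\<psi> \<xi>)) + integral {m..b} (\<lambda>\<xi>. cis (\<psi> \<xi>)) = integral {a..b} (\<lambda>\<xi>. cis (\<psi> \<xi>))"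
    by (rule Henstock_Kurzweil_Integration.integral_combine[OF am]) (use c0 in \<open>auto intro!: integrable_continuous_real continuous_intros\<close>)
  have t1: "norm (integral {a..m} (\<lambda>\<xi>. cis (\<psi> \<xi>))) \<le> \<delta> / \<mu>"
  proof -
    have "norm (integral {a..m} (\<lambda>\<xi>. cis (\<psi> \<xi>))) \<le> m - a"
      by (rule trivial_bound[OF am(1)]) (use c0 am in \<open>auto intro: continuous_on_subset\<close>)
    also have "\<dots> \<le> \<delta> / \<mu>" unfolding m_def by auto
    finally show ?thesis .
  qed
  have t2: "norm (integral {m..b} (\<lambda>\<xi>. cis (\<psi> \<xi>))) \<le> 4 / \<delta>"
  proof (cases "m = b")
    case True then show ?thesis using de by simp
  next
    case False
    then have mdef: "m = a + \<delta> / \<mu>" unfolding m_def by auto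
    have sub: "{m..b} \<subseteq> {a..b}" using am by auto
    show ?thesis
    proof (rule vdc1[OF am(2) de])
      show "\<And>\<xi>. \<xi> \<in> {m..b} \<Longrightarrow> (\<psi> has_real_derivative \<psi>' \<xi>) (at \<xi>)" using d1 sub by auto
      show "\<And>\<xi>. \<xi> \<in> {m..b} \<Longrightarrow> (\<psi>' has_real_derivative \<psi>'' \<xi>) (at \<xi>)" using d2 sub by auto
      show "continuous_on {m..b} \<psi>''" using c2 sub continuous_on_subset by blast
      show "\<psi>'' \<xi> \<ge> 0" if "\<xi> \<in> {m..b}" for \<xi>
      proof -
        have "\<psi>'' \<xi> \<ge> \<mu>" using pos sub that by blast
        then show ?thesis using mu by linarith
      qed
      fix \<xi> assume xi: "\<xi> \<in> {m..b}"
      have "\<psi>' \<xi> - \<psi>' a \<ge> \<mu> * (\<xi> - a)"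
        by (rule mvt_low[OF d2 pos]) (use xi am in auto)
      moreover have "\<mu> * (\<xi> - a) \<ge> \<mu> * (\<delta> / \<mu>)"
        using xi mdef mu by (intro mult_left_mono) auto
      ultimately have "\<psi>' \<xi> \<ge> \<delta>" using mu start by simp
      then show "\<bar>\<psi>' \<xi>\<bar> \<ge> \<delta>" by simp
    qed
  qed
  show ?thesis unfolding split[symmetric]
    using t1 t2 norm_triangle_ineq[of "integral {a..m} (\<lambda>\<xi>. cis (\<psi> \<xi>))" "integral {m..b} (\<lambda>\<xi>. cis (\<psi> \<xi>))"]
    by linarith
qed

lemma vdc2b:
  fixes \<psi> \<psi>' \<psi>'' :: "real \<Rightarrow> real"
  assumes ab: "a \<le> b" and mu: "\<mu> > 0" and de: "\<delta> > 0"
    and d1: "\<And>\<xi>. \<xi> \<in> {a..b} \<Longrightarrow> (\<psi> has_real_derivative \<psi>' \<xi>) (at \<xi>)"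
    and d2: "\<And>\<xi>. \<xi> \<in> {a..b} \<Longrightarrow> (\<psi>' has_real_derivative \<psi>'' \<xi>) (at \<xi>)"
    and c2: "continuous_on {a..b} \<psi>''"
    and pos: "\<And>\<xi>. \<xi> \<in> {a..b} \<Longrightarrow> \<psi>'' \<xi> \<ge> \<mu>"
    and fin: "\<psi>' b \<le> 0"
  shows "norm (integral {a..b} (\<lambda>\<xi>. cis (\<psi> \<xi>))) \<le> \<delta> / \<mu> + 4 / \<delta>"
proof -
  define m where "m = max a (b - \<delta> / \<mu>)"
  have am: "a \<le> m" "m \<le> b" unfolding m_def using ab mu de by auto
  have c0: "continuous_on {a..b} \<psi>"
    using d1 by (meson DERIV_isCont continuous_at_imp_continuous_on)
  have split: "integral {a..m} (\<lambda>\<xi>. cis (\<psi> \<xi>)) + integral {m..b} (\<lambda>\<xi>. cis (\<psi> \<xi>)) = integral {a..b} (\<lambda>\<xi>. cis (\<psi> \<xi>))"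
    by (rule Henstock_Kurzweil_Integration.integral_combine[OF am]) (use c0 in \<open>auto intro!: integrable_continuous_real continuous_intros\<close>)
  have t1: "norm (integral {m..b} (\<lambda>\<xi>. cis (\<psi> \<xi>))) \<le> \<delta> / \<mu>"
  proof -
    have "norm (integral {m..b} (\<lambda>\<xi>. cis (\<psi> \<xi>))) \<le> b - m"
      by (rule trivial_bound[OF am(2)]) (use c0 am in \<open>auto intro: continuous_on_subset\<close>)
    also have "\<dots> \<le> \<delta> / \<mu>" unfolding m_def by auto
    finally show ?thesis .
  qed
  have t2: "norm (integral {a..m} (\<lambda>\<xi>. cis (\<psi> \<xi>))) \<le> 4 / \<delta>"
  proof (cases "m = a")
    case True then show ?thesis using de by simp
  next
    case False
    then have mdef: "m = b - \<delta> / \<mu>" unfolding m_def by auto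
    have sub: "{a..m} \<subseteq> {a..b}" using am by auto
    show ?thesis
    proof (rule vdc1[OF am(1) de])
      show "\<And>\<xi>. \<xi> \<in> {a..m} \<Longrightarrow> (\<psi> has_real_derivative \<psi>' \<xi>) (at \<xi>)" using d1 sub by auto
      show "\<And>\<xi>. \<xi> \<in> {a..m} \<Longrightarrow> (\<psi>' has_real_derivative \<psi>'' \<xi>) (at \<xi>)" using d2 sub by auto
      show "continuous_on {a..m} \<psi>''" using c2 sub continuous_on_subset by blast
      show "\<psi>'' \<xi> \<ge> 0" if "\<xi> \<in> {a..m}" for \<xi>
      proof -
        have "\<psi>'' \<xi> \<ge> \<mu>" using pos sub that by blast
        then show ?thesis using mu by linarith
      qed
      fix \<xi> assume xi: "\<xi> \<in> {a..m}"
      have "\<psi>' b - \<psi>' \<xi> \<ge> \<mu> * (b - \<xi>)"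
        by (rule mvt_low[OF d2 pos]) (use xi am in auto)
      moreover have "\<mu> * (b - \<xi>) \<ge> \<mu> * (\<delta> / \<mu>)"
        using xi mdef mu by (intro mult_left_mono) auto
      ultimately have "\<psi>' \<xi> \<le> - \<delta>" using mu fin by simp
      then show "\<bar>\<psi>' \<xi>\<bar> \<ge> \<delta>" by simp
    qed
  qed
  show ?thesis unfolding split[symmetric]
    using t1 t2 norm_triangle_ineq[of "integral {a..m} (\<lambda>\<xi>. cis (\<psi> \<xi>))" "integral {m..b} (\<lambda>\<xi>. cis (\<psi> \<xi>))"]
    by linarith
qed




lemma vdc2pos:
  fixes \<psi> \<psi>' \<psi>'' :: "real \<Rightarrow> real"
  assumes ab: "a \<le> b" and mu: "\<mu> > 0"
    and d1: "\<And>\<xi>. \<xi> \<in> {a..b} \<Longrightarrow> (\<psi> has_real_derivative \<psi>' \<xi>) (at \<xi>)"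
    and d2: "\<And>\<xi>. \<xi> \<in> {a..b} \<Longrightarrow> (\<psi>' has_real_derivative \<psi>'' \<xi>) (at \<xi>)"
    and c2: "continuous_on {a..b} \<psi>''"
    and pos: "\<And>\<xi>. \<xi> \<in> {a..b} \<Longrightarrow> \<psi>'' \<xi> \<ge> \<mu>"
  shows "norm (integral {a..b} (\<lambda>\<xi>. cis (\<psi> \<xi>))) \<le> 8 / sqrt \<mu>"
proof -
  define \<delta> where "\<delta> = 2 * sqrt \<mu>"
  have de: "\<delta> > 0" unfolding \<delta>_def using mu by simp
  have val: "\<delta> / \<mu> + 4 / \<delta> = 4 / sqrt \<mu>"
  proof -
    define r where "r = sqrt \<mu>"
    have r: "r > 0" "\<mu> = r * r" unfolding r_def using mu by auto
    show ?thesis unfolding \<delta>_def r_def[symmetric] r(2) using r(1) by (simp add: field_simps)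
  qed
  have le48: "4 / sqrt \<mu> \<le> 8 / sqrt \<mu>" using mu by (simp add: divide_right_mono)
  have c0: "continuous_on {a..b} \<psi>"
    using d1 by (meson DERIV_isCont continuous_at_imp_continuous_on)
  have c1: "continuous_on {a..b} \<psi>'"
    using d2 by (meson DERIV_isCont continuous_at_imp_continuous_on)
  consider "\<psi>' a \<ge> 0" | "\<psi>' b \<le> 0" | "\<psi>' a < 0" "\<psi>' b > 0" by linarith
  then show ?thesis
  proof cases
    case 1 then show ?thesis using vdc2a[OF ab mu de d1 d2 c2 pos] val le48 by linarith
  next
    case 2 then show ?thesis using vdc2b[OF ab mu de d1 d2 c2 pos] val le48 by linarith
  next
    case 3
    obtain c where c: "a \<le> c" "c \<le> b" "\<psi>' c = 0"
      using IVT'[of \<psi>' a 0 b] 3 ab c1 by force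
    have split: "integral {a..c} (\<lambda>\<xi>. cis (\<psi> \<xi>)) + integral {c..b} (\<lambda>\<xi>. cis (\<psi> \<xi>)) = integral {a..b} (\<lambda>\<xi>. cis (\<psi> \<xi>))"
      by (rule Henstock_Kurzweil_Integration.integral_combine[OF c(1,2)]) (use c0 in \<open>auto intro!: integrable_continuous_real continuous_intros\<close>)
    have s1: "{a..c} \<subseteq> {a..b}" "{c..b} \<subseteq> {a..b}" using c by auto
    have n1: "norm (integral {a..c} (\<lambda>\<xi>. cis (\<psi> \<xi>))) \<le> \<delta> / \<mu> + 4 / \<delta>"
      apply (rule vdc2b[OF c(1) mu de, where \<psi>'=\<psi>' and \<psi>''=\<psi>''])
      using d1 d2 pos s1 c continuous_on_subset[OF c2 s1(1)] by auto
    have n2: "norm (integral {c..b} (\<lambda>\<xi>. cis (\<psi> \<xi>))) \<le> \<delta> / \<mu> + 4 / \<delta>"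
      apply (rule vdc2a[OF c(2) mu de, where \<psi>'=\<psi>' and \<psi>''=\<psi>''])
      using d1 d2 pos s1 c continuous_on_subset[OF c2 s1(2)] by auto
    show ?thesis unfolding split[symmetric]
      using n1 n2 val norm_triangle_ineq[of "integral {a..c} (\<lambda>\<xi>. cis (\<psi> \<xi>))" "integral {c..b} (\<lambda>\<xi>. cis (\<psi> \<xi>))"]
      by linarith
  qed
qed

lemma vdc2g:
  fixes \<psi> \<psi>' \<psi>'' :: "real \<Rightarrow> real"
  assumes ab: "a \<le> b" and mu: "\<mu> > 0"
    and d1: "\<And>\<xi>. \<xi> \<in> {a..b} \<Longrightarrow> (\<psi> has_real_derivative \<psi>' \<xi>) (at \<xi>)"
    and d2: "\<And>\<xi>. \<xi> \<in> {a..b} \<Longrightarrow> (\<psi>' has_real_derivative \<psi>'' \<xi>) (at \<xi>)"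
    and c2: "continuous_on {a..b} \<psi>''"
    and sgn: "(\<forall>\<xi>\<in>{a..b}. \<psi>'' \<xi> \<ge> \<mu>) \<or> (\<forall>\<xi>\<in>{a..b}. \<psi>'' \<xi> \<le> - \<mu>)"
  shows "norm (integral {a..b} (\<lambda>\<xi>. cis (\<psi> \<xi>))) \<le> 8 / sqrt \<mu>"
  using sgn
proof
  assume "\<forall>\<xi>\<in>{a..b}. \<psi>'' \<xi> \<ge> \<mu>"
  then show ?thesis using vdc2pos[OF ab mu d1 d2 c2] by blast
next
  assume n: "\<forall>\<xi>\<in>{a..b}. \<psi>'' \<xi> \<le> - \<mu>"
  have n': "\<And>\<xi>. \<xi> \<in> {a..b} \<Longrightarrow> \<mu> \<le> - \<psi>'' \<xi>" using n by force
  have "norm (integral {a..b} (\<lambda>\<xi>. cis (- \<psi> \<xi>))) \<le> 8 / sqrt \<mu>"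
    apply (rule vdc2pos[OF ab mu, where \<psi>'="\<lambda>\<xi>. - \<psi>' \<xi>" and \<psi>''="\<lambda>\<xi>. - \<psi>'' \<xi>"])
    using d1 d2 c2 n' by (auto intro!: derivative_intros continuous_intros)
  then show ?thesis by (simp only: norm_integral_cis_neg)
qed




lemma pow2_ge_succ: "(2::real) ^ k \<ge> real k + 1"
  by (induction k) auto

lemma A_ge: "A_const \<beta> \<gamma> \<ge> 1" "A_const \<beta> \<gamma> \<ge> \<bar>\<gamma> / (3*\<beta>)\<bar> powr (1/2)"
  "A_const \<beta> \<gamma> \<ge> 100*\<bar>\<beta>\<bar>" "A_const \<beta> \<gamma> \<ge> 100*\<bar>\<gamma>\<bar>"
  unfolding A_const_def by (simp_all add: le_max_iff_disj)

lemma a_gt_A: "a_const \<beta> \<gamma> > A_const \<beta> \<gamma>"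
proof -
  define A where "A = A_const \<beta> \<gamma>"
  have A1: "A \<ge> 1" unfolding A_def using A_ge by blast
  define n where "n = nat \<lfloor>A\<rfloor>"
  have n: "real_of_int \<lfloor>A\<rfloor> = real n" unfolding n_def using A1 by simp
  have "a_const \<beta> \<gamma> = 2 ^ n" unfolding a_const_def A_def[symmetric] n
    by (simp add: powr_realpow)
  moreover have "A < real n + 1" using n by linarith
  ultimately show ?thesis using pow2_ge_succ[of n] unfolding A_def by linarith
qed

lemma a_gt1: "a_const \<beta> \<gamma> > 1"
  using a_gt_A[of \<beta> \<gamma>] A_ge(1)[where \<beta>=\<beta> and \<gamma>=\<gamma>] by linarith

lemma a4_big:
  assumes "\<beta> < 0" "\<gamma> > 0"
  shows "(a_const \<beta> \<gamma>)^4 > \<gamma> / (3 * \<bar>\<beta>\<bar>)"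
proof -
  define s where "s = \<gamma> / (3 * \<bar>\<beta>\<bar>)"
  define a where "a = a_const \<beta> \<gamma>"
  have s0: "s > 0" unfolding s_def using assms by (intro divide_pos_pos) auto
  have neg: "\<gamma> / (3*\<beta>) < 0" using divide_pos_neg[of \<gamma> "3*\<beta>"] assms by linarith
  have habs: "\<bar>\<gamma> / (3*\<beta>)\<bar> = s" unfolding s_def using assms neg by (simp add: abs_div abs_mult)
  have e: "\<bar>\<gamma> / (3*\<beta>)\<bar> powr (1/2) = sqrt s"
    by (subst habs, rule powr_half_sqrt, use s0 in linarith)
  have as: "a > sqrt s" unfolding a_def
    using a_gt_A[of \<beta> \<gamma>] A_ge(2)[where \<beta>=\<beta> and \<gamma>=\<gamma>] unfolding e by linarith
  have a1: "a > 1" unfolding a_def by (rule a_gt1)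
  show ?thesis
  proof (cases "s \<le> 1")
    case True
    have "a^4 > 1" using a1 by simp
    then show ?thesis using True unfolding s_def a_def by linarith
  next
    case False
    have "(sqrt s)^4 < a^4" using as s0 by (intro power_strict_mono) auto
    moreover have "(sqrt s)^4 = s * s" using s0 by (simp add: power4_eq_xxxx)
    moreover have "s * s \<ge> s" using False by simp
    ultimately have "s < a^4" by linarith
    then show ?thesis unfolding s_def a_def by simp
  qed
qed




definition phi1 :: "real \<Rightarrow> real \<Rightarrow> real \<Rightarrow> real" where
  "phi1 \<beta> \<gamma> \<xi> = 3*\<beta>*\<xi>^2 - \<gamma>/\<xi>^2"
definition phi2 :: "real \<Rightarrow> real \<Rightarrow> real \<Rightarrow> real" where
  "phi2 \<beta> \<gamma> \<xi> = 6*\<beta>*\<xi> + 2*\<gamma>/\<xi>^3"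

lemma phase_deriv: "\<xi> \<noteq> 0 \<Longrightarrow> (phase \<beta> \<gamma> has_real_derivative phi1 \<beta> \<gamma> \<xi>) (at \<xi>)"
  unfolding phase_def phi1_def
  by (auto intro!: derivative_eq_intros simp: field_simps power2_eq_square)

lemma phi1_deriv: "\<xi> \<noteq> 0 \<Longrightarrow> (phi1 \<beta> \<gamma> has_real_derivative phi2 \<beta> \<gamma> \<xi>) (at \<xi>)"
  unfolding phi2_def phi1_def
  by (auto intro!: derivative_eq_intros simp: field_simps power2_eq_square power3_eq_cube)

lemma phi2_cont: "0 \<notin> S \<Longrightarrow> continuous_on S (phi2 \<beta> \<gamma>)"
  unfolding phi2_def by (auto intro!: continuous_intros)

definition c0 :: "real \<Rightarrow> real \<Rightarrow> real" where
  "c0 \<beta> \<gamma> = 6*\<bar>\<beta>\<bar> - 2*\<gamma>/(a_const \<beta> \<gamma>)^4"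
definition MM :: "real \<Rightarrow> real \<Rightarrow> real" where
  "MM \<beta> \<gamma> = 48*\<bar>\<beta>\<bar> + \<gamma>"

lemma c0_pos: assumes "\<beta> < 0" "\<gamma> > 0" shows "c0 \<beta> \<gamma> > 0"
proof -
  define a where "a = a_const \<beta> \<gamma>"
  have a4: "a^4 > \<gamma> / (3*\<bar>\<beta>\<bar>)" unfolding a_def by (rule a4_big[OF assms])
  have b: "\<bar>\<beta>\<bar> > 0" using assms by simp
  have ap: "a^4 > 0" using a_gt1[of \<beta> \<gamma>] unfolding a_def by simp
  have "\<gamma> < 3*\<bar>\<beta>\<bar> * a^4" using a4 b by (simp add: field_simps)
  then have "2*\<gamma>/a^4 < 6*\<bar>\<beta>\<bar>" using ap by (simp add: field_simps)
  then show ?thesis unfolding c0_def a_def by simp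
qed

lemma phi2_bound:
  assumes "\<beta> < 0" "\<gamma> > 0" "\<xi> \<ge> a_const \<beta> \<gamma>"
  shows "phi2 \<beta> \<gamma> \<xi> \<le> - c0 \<beta> \<gamma> * \<xi>"
proof -
  define a where "a = a_const \<beta> \<gamma>"
  have a1: "a > 1" unfolding a_def by (rule a_gt1)
  have xa: "\<xi> \<ge> a" using assms unfolding a_def by simp
  have x0: "\<xi> > 0" using a1 xa by simp
  have "a^4 \<le> \<xi>^4" using a1 xa by (intro power_mono) auto
  then have "1/\<xi>^4 \<le> 1/a^4" using a1 x0 by (intro divide_left_mono) auto
  then have "2*\<gamma>*\<xi> * (1/\<xi>^4) \<le> 2*\<gamma>*\<xi> * (1/a^4)" using x0 assms by (intro mult_left_mono) auto
  moreover have "2*\<gamma>*\<xi> * (1/\<xi>^4) = 2*\<gamma>/\<xi>^3" using x0 by (simp add: field_simps power3_eq_cube power4_eq_xxxx)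
  ultimately have "2*\<gamma>/\<xi>^3 \<le> 2*\<gamma>/a^4 * \<xi>" by simp
  then show ?thesis unfolding phi2_def c0_def a_def[symmetric] using assms(1) by (simp add: algebra_simps)
qed

lemma phi1_bound:
  assumes "\<beta> < 0" "\<gamma> > 0" "N \<ge> 1" "N \<le> \<xi>" "\<xi> \<le> 4*N"
  shows "\<bar>phi1 \<beta> \<gamma> \<xi>\<bar> \<le> MM \<beta> \<gamma> * N^2"
proof -
  have x1: "\<xi> \<ge> 1" using assms by simp
  have first: "\<bar>phi1 \<beta> \<gamma> \<xi>\<bar> \<le> 3*\<bar>\<beta>\<bar>*\<xi>^2 + \<gamma>/\<xi>^2"
  proof -
    have e: "phi1 \<beta> \<gamma> \<xi> = - (3*\<bar>\<beta>\<bar>*\<xi>^2 + \<gamma>/\<xi>^2)" using assms(1) unfolding phi1_def by simp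
    have "3*\<bar>\<beta>\<bar>*\<xi>^2 + \<gamma>/\<xi>^2 \<ge> 0" using assms(2) by simp
    then show ?thesis unfolding e by simp
  qed
  have "\<xi>^2 \<le> (4*N)^2" using assms by (intro power_mono) auto
  then have "\<xi>^2 \<le> 16 * N^2" by (simp add: power_mult_distrib)
  then have "\<bar>\<beta>\<bar> * \<xi>^2 \<le> \<bar>\<beta>\<bar> * (16 * N^2)" by (intro mult_left_mono) auto
  then have "3*\<bar>\<beta>\<bar>*\<xi>^2 \<le> 48*\<bar>\<beta>\<bar>*N^2" by simp
  moreover have "\<gamma>/\<xi>^2 \<le> \<gamma>" using x1 assms by (simp add: divide_le_eq one_le_power)
  moreover have "\<gamma> \<le> \<gamma> * N^2" using assms by (simp add: one_le_power)
  ultimately have "3*\<bar>\<beta>\<bar>*\<xi>^2 + \<gamma>/\<xi>^2 \<le> MM \<beta> \<gamma> * N^2" unfolding MM_def by (simp add: algebra_simps)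
  then show ?thesis using first by linarith
qed

definition Jint :: "real \<Rightarrow> real \<Rightarrow> real \<Rightarrow> real \<Rightarrow> real \<Rightarrow> complex" where
  "Jint \<beta> \<gamma> N x t = integral {N..4*N} (\<lambda>\<xi>. cis (x*\<xi> - t * phase \<beta> \<gamma> \<xi>))"

definition C1g :: "real \<Rightarrow> real \<Rightarrow> real" where "C1g \<beta> \<gamma> = 8 + 8 * sqrt (2 * MM \<beta> \<gamma> / c0 \<beta> \<gamma>)"

definition bbg :: "real \<Rightarrow> real \<Rightarrow> real \<Rightarrow> real" where
  "bbg \<beta> \<gamma> y = (if \<bar>y\<bar> < 1 then 6 else 2 * C1g \<beta> \<gamma> / sqrt \<bar>y\<bar>)"

locale setting =
  fixes \<beta> \<gamma> N :: real
  assumes b: "\<beta> < 0" and g: "\<gamma> > 0" and N: "N \<ge> a_const \<beta> \<gamma>"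
begin

lemma N1: "N > 1" using N a_gt1[of \<beta> \<gamma>] by linarith

lemma in_pos: "\<xi> \<in> {N..4*N} \<Longrightarrow> \<xi> > 1" using N1 by auto

lemma d1: "\<xi> \<in> {N..4*N} \<Longrightarrow> ((\<lambda>\<xi>. x*\<xi> - t * phase \<beta> \<gamma> \<xi>) has_real_derivative (x - t * phi1 \<beta> \<gamma> \<xi>)) (at \<xi>)"
  using phase_deriv[of \<xi> \<beta> \<gamma>] in_pos[of \<xi>]
  by (auto intro!: derivative_eq_intros)

lemma d2: "\<xi> \<in> {N..4*N} \<Longrightarrow> ((\<lambda>\<xi>. x - t * phi1 \<beta> \<gamma> \<xi>) has_real_derivative (- t * phi2 \<beta> \<gamma> \<xi>)) (at \<xi>)"
  using phi1_deriv[of \<xi> \<beta> \<gamma>] in_pos[of \<xi>]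
  by (auto intro!: derivative_eq_intros)

lemma c2: "continuous_on {N..4*N} (\<lambda>\<xi>. - t * phi2 \<beta> \<gamma> \<xi>)"
proof -
  have "0 \<notin> {N..4*N}" using N1 by auto
  then show ?thesis by (auto intro!: continuous_intros phi2_cont)
qed

lemma c0': "continuous_on {N..4*N} (\<lambda>\<xi>. x*\<xi> - t * phase \<beta> \<gamma> \<xi>)"
  using d1 by (meson DERIV_isCont continuous_at_imp_continuous_on)

lemma phi2_le: "\<xi> \<in> {N..4*N} \<Longrightarrow> phi2 \<beta> \<gamma> \<xi> \<le> - c0 \<beta> \<gamma> * N"
proof -
  assume xi: "\<xi> \<in> {N..4*N}"
  have "phi2 \<beta> \<gamma> \<xi> \<le> - c0 \<beta> \<gamma> * \<xi>" using phi2_bound[OF b g] xi N by auto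
  moreover have "c0 \<beta> \<gamma> * N \<le> c0 \<beta> \<gamma> * \<xi>" using c0_pos[OF b g] xi by (intro mult_left_mono) auto
  ultimately show ?thesis by linarith
qed

lemma JB0: "norm (Jint \<beta> \<gamma> N x t) \<le> 3 * N"
  unfolding Jint_def using trivial_bound[OF _ c0', of x t] N1 by simp

lemma JB2:
  assumes t: "t \<noteq> 0"
  shows "norm (Jint \<beta> \<gamma> N x t) \<le> 8 / sqrt (\<bar>t\<bar> * c0 \<beta> \<gamma> * N)"
  unfolding Jint_def
proof (rule vdc2g[OF _ _ d1 d2 c2])
  show "N \<le> 4 * N" using N1 by simp
  have cp: "c0 \<beta> \<gamma> > 0" using c0_pos[OF b g] .
  show "0 < \<bar>t\<bar> * c0 \<beta> \<gamma> * N" using t cp N1 by simp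
  show "(\<forall>\<xi>\<in>{N..4 * N}. \<bar>t\<bar> * c0 \<beta> \<gamma> * N \<le> - t * phi2 \<beta> \<gamma> \<xi>) \<or>
        (\<forall>\<xi>\<in>{N..4 * N}. - t * phi2 \<beta> \<gamma> \<xi> \<le> - (\<bar>t\<bar> * c0 \<beta> \<gamma> * N))"
  proof (cases "t > 0")
    case True
    have "\<bar>t\<bar> * c0 \<beta> \<gamma> * N \<le> - t * phi2 \<beta> \<gamma> \<xi>" if "\<xi> \<in> {N..4*N}" for \<xi>
    proof -
      have "t * (c0 \<beta> \<gamma> * N) \<le> t * (- phi2 \<beta> \<gamma> \<xi>)" using phi2_le[OF that] True by (intro mult_left_mono) auto
      then show ?thesis using True by (simp add: algebra_simps)
    qed
    then show ?thesis by blast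
  next
    case False
    then have tn: "t < 0" using t by simp
    have "- t * phi2 \<beta> \<gamma> \<xi> \<le> - (\<bar>t\<bar> * c0 \<beta> \<gamma> * N)" if "\<xi> \<in> {N..4*N}" for \<xi>
    proof -
      have "(- t) * phi2 \<beta> \<gamma> \<xi> \<le> (- t) * (- c0 \<beta> \<gamma> * N)" using phi2_le[OF that] tn by (intro mult_left_mono) auto
      then show ?thesis using tn by (simp add: algebra_simps)
    qed
    then show ?thesis by blast
  qed
qed

lemma JB1:
  assumes x: "x \<noteq> 0" and small: "\<bar>t\<bar> * MM \<beta> \<gamma> * N^2 \<le> \<bar>x\<bar> / 2"
  shows "norm (Jint \<beta> \<gamma> N x t) \<le> 8 / \<bar>x\<bar>"
proof -
  have "norm (Jint \<beta> \<gamma> N x t) \<le> 4 / (\<bar>x\<bar> / 2)"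
    unfolding Jint_def
  proof (rule vdc1g[OF _ _ d1 d2 c2])
    show "N \<le> 4 * N" using N1 by simp
    show "0 < \<bar>x\<bar> / 2" using x by simp
    have cp: "c0 \<beta> \<gamma> > 0" using c0_pos[OF b g] .
    have p2: "phi2 \<beta> \<gamma> \<xi> \<le> 0" if "\<xi> \<in> {N..4*N}" for \<xi>
    proof -
      have "c0 \<beta> \<gamma> * N > 0" using cp N1 by simp
      then show ?thesis using phi2_le[OF that] by linarith
    qed
    show "(\<forall>\<xi>\<in>{N..4 * N}. 0 \<le> - t * phi2 \<beta> \<gamma> \<xi>) \<or> (\<forall>\<xi>\<in>{N..4 * N}. - t * phi2 \<beta> \<gamma> \<xi> \<le> 0)"
    proof (cases "t \<ge> 0")
      case True
      then show ?thesis using p2 by (auto simp: mult_nonneg_nonpos)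
    next
      case False
      then show ?thesis using p2 by (auto simp: mult_nonpos_nonpos)
    qed
    fix \<xi> assume xi: "\<xi> \<in> {N..4*N}"
    have "\<bar>phi1 \<beta> \<gamma> \<xi>\<bar> \<le> MM \<beta> \<gamma> * N^2" using phi1_bound[OF b g] xi N1 by auto
    then have "\<bar>t\<bar> * \<bar>phi1 \<beta> \<gamma> \<xi>\<bar> \<le> \<bar>t\<bar> * (MM \<beta> \<gamma> * N^2)" by (intro mult_left_mono) auto
    then have "\<bar>t * phi1 \<beta> \<gamma> \<xi>\<bar> \<le> \<bar>x\<bar> / 2" using small by (simp add: abs_mult mult.assoc)
    then show "\<bar>x\<bar> / 2 \<le> \<bar>x - t * phi1 \<beta> \<gamma> \<xi>\<bar>" by linarith
  qed
  then show ?thesis by simp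
qed


lemma MM_pos: "MM \<beta> \<gamma> > 0" unfolding MM_def using b g by simp



lemma C1_pos: "C1g \<beta> \<gamma> > 0"
proof -
  have "2 * MM \<beta> \<gamma> / c0 \<beta> \<gamma> > 0" using MM_pos c0_pos[OF b g] by simp
  then show ?thesis unfolding C1g_def by (simp add: add_pos_nonneg)
qed

lemma JB:
  assumes y: "N * \<bar>x\<bar> \<ge> 1"
  shows "norm (Jint \<beta> \<gamma> N x t) \<le> C1g \<beta> \<gamma> * N / sqrt (N * \<bar>x\<bar>)"
proof -
  define yy where "yy = N * \<bar>x\<bar>"
  have y1: "yy \<ge> 1" using y unfolding yy_def .
  have x0: "x \<noteq> 0" using y by auto
  have cp: "c0 \<beta> \<gamma> > 0" using c0_pos[OF b g] .
  have Mp: "MM \<beta> \<gamma> > 0" by (rule MM_pos)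
  have sy: "sqrt yy > 0" using y1 by simp
  have Np: "N > 0" using N1 by simp
  define K2 where "K2 = 8 * sqrt (2 * MM \<beta> \<gamma> / c0 \<beta> \<gamma>) * N / sqrt yy"
  have K2: "K2 \<ge> 0" unfolding K2_def using cp Mp Np sy by simp
  have C1eq: "C1g \<beta> \<gamma> * N / sqrt yy = 8 * N / sqrt yy + K2" unfolding C1g_def K2_def by (simp add: add_divide_distrib algebra_simps)
  show ?thesis
  proof (cases "\<bar>t\<bar> * MM \<beta> \<gamma> * N^2 \<le> \<bar>x\<bar> / 2")
    case True
    have "norm (Jint \<beta> \<gamma> N x t) \<le> 8 / \<bar>x\<bar>" by (rule JB1[OF x0 True])
    also have "8 / \<bar>x\<bar> = 8 * N / yy" unfolding yy_def using Np by simp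
    also have "\<dots> \<le> 8 * N / sqrt yy"
    proof -
      have s1: "1 \<le> sqrt yy" using y1 by simp
      then have "sqrt yy * 1 \<le> sqrt yy * sqrt yy" by (intro mult_left_mono) auto
      then have "sqrt yy \<le> yy" using y1 by simp
      then show ?thesis using Np sy by (intro divide_left_mono) auto
    qed
    finally show ?thesis unfolding yy_def[symmetric] C1eq using K2 by linarith
  next
    case False
    then have tpos: "\<bar>t\<bar> * MM \<beta> \<gamma> * N^2 > \<bar>x\<bar> / 2" by simp
    then have t0: "t \<noteq> 0" using x0 by auto
    define v where "v = c0 \<beta> \<gamma> * yy / (2 * MM \<beta> \<gamma> * N^2)"
    have vp: "v > 0" unfolding v_def using cp y1 Mp Np by simp
    have uv: "v \<le> \<bar>t\<bar> * c0 \<beta> \<gamma> * N"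
    proof -
      have "\<bar>x\<bar> < 2 * (\<bar>t\<bar> * MM \<beta> \<gamma> * N^2)" using tpos by simp
      then have "c0 \<beta> \<gamma> * N * \<bar>x\<bar> \<le> c0 \<beta> \<gamma> * N * (2 * (\<bar>t\<bar> * MM \<beta> \<gamma> * N^2))"
        using cp Np by (intro mult_left_mono) auto
      then show ?thesis unfolding v_def yy_def using Mp Np
        by (simp add: divide_le_eq power2_eq_square algebra_simps)
    qed
    have "norm (Jint \<beta> \<gamma> N x t) \<le> 8 / sqrt (\<bar>t\<bar> * c0 \<beta> \<gamma> * N)" by (rule JB2[OF t0])
    also have "\<dots> \<le> 8 / sqrt v" using uv vp by (intro divide_left_mono) auto
    also have "8 / sqrt v = K2"
    proof -
      have "sqrt v * sqrt (2 * MM \<beta> \<gamma> / c0 \<beta> \<gamma>) = sqrt (yy / N^2)"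
        unfolding real_sqrt_mult[symmetric] v_def using cp Mp by (simp add: field_simps)
      also have "\<dots> = sqrt yy / N" using Np by (simp add: real_sqrt_divide)
      finally have e: "sqrt v * sqrt (2 * MM \<beta> \<gamma> / c0 \<beta> \<gamma>) = sqrt yy / N" .
      have sv: "sqrt v > 0" using vp by simp
      show ?thesis unfolding K2_def using e sv sy Np
        by (simp add: field_simps)
    qed
    finally show ?thesis unfolding yy_def[symmetric] C1eq using Np sy by (smt (verit) divide_nonneg_pos)
  qed
qed


lemma phase_neg: "phase \<beta> \<gamma> (- \<xi>) = - phase \<beta> \<gamma> \<xi>"
  unfolding phase_def by (simp add: power3_eq_cube)

lemma kernel_split: "kernelK \<beta> \<gamma> N x t = Jint \<beta> \<gamma> N x t + Jint \<beta> \<gamma> N (- x) (- t)"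
proof -
  define g where "g \<xi> = cis (x*\<xi> - t * phase \<beta> \<gamma> \<xi>)" for \<xi>
  define S where "S = {\<xi>::real. N \<le> \<bar>\<xi>\<bar> \<and> \<bar>\<xi>\<bar> \<le> 4*N}"
  have Np: "N > 0" using N1 by simp
  have Seq: "S = {-4*N..-N} \<union> {N..4*N}" unfolding S_def using Np by auto
  have ig: "exp (- \<i> * complex_of_real (t * phase \<beta> \<gamma> \<xi>) + \<i> * complex_of_real (x * \<xi>)) = g \<xi>" for \<xi>
    unfolding g_def cis_conv_exp by (simp add: algebra_simps)
  have K: "kernelK \<beta> \<gamma> N x t = (LINT \<xi>|lborel. indicator S \<xi> *\<^sub>R g \<xi>)"
    unfolding kernelK_def ig S_def ..
  have S0: "0 \<notin> S" unfolding S_def using Np by auto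
  have cg: "continuous_on S g" unfolding g_def phase_def using S0
    by (auto intro!: continuous_intros)
  have cS: "compact S" unfolding Seq by auto
  have si: "set_integrable lborel S g" unfolding set_integrable_def
    by (rule borel_integrable_compact[OF cS cg])
  have "(LINT \<xi>|lborel. indicator S \<xi> *\<^sub>R g \<xi>) = integral S g"
    using set_borel_integral_eq_integral(2)[OF si] unfolding set_lebesgue_integral_def .
  also have "integral S g = integral {-4*N..-N} g + integral {N..4*N} g"
  proof -
    have c1: "continuous_on {-4*N..-N} g" using cg unfolding Seq by (rule continuous_on_subset) auto
    have c2: "continuous_on {N..4*N} g" using cg unfolding Seq by (rule continuous_on_subset) auto
    have h1: "(g has_integral integral {-4*N..-N} g) {-4*N..-N}" using integrable_continuous_real[OF c1] by blast
    have h2: "(g has_integral integral {N..4*N} g) {N..4*N}" using integrable_continuous_real[OF c2] by blast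
    have "{-4*N..-N} \<inter> {N..4*N} = {}" using Np by auto
    then have "(g has_integral (integral {-4*N..-N} g + integral {N..4*N} g)) S"
      unfolding Seq using has_integral_Un[OF h1 h2] by simp
    then show ?thesis by (rule integral_unique)
  qed
  also have "integral {-4*N..-N} g = integral {N..4*N} (\<lambda>\<xi>. g (- \<xi>))"
    using Henstock_Kurzweil_Integration.integral_reflect_real[of "4*N" N "\<lambda>\<xi>. g (- \<xi>)"] by simp
  also have "(\<lambda>\<xi>. g (- \<xi>)) = (\<lambda>\<xi>. cis ((-x)*\<xi> - (-t) * phase \<beta> \<gamma> \<xi>))"
    unfolding g_def phase_neg by simp
  finally show ?thesis unfolding K Jint_def g_def by simp
qed


lemma bb_nonneg: "bbg \<beta> \<gamma> y \<ge> 0" unfolding bbg_def using C1_pos by simp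

lemma K_bound: "cmod (kernelK \<beta> \<gamma> N x t) \<le> N * bbg \<beta> \<gamma> (N * x)"
proof -
  have Np: "N > 0" using N1 by simp
  have tri: "cmod (kernelK \<beta> \<gamma> N x t) \<le> cmod (Jint \<beta> \<gamma> N x t) + cmod (Jint \<beta> \<gamma> N (- x) (- t))"
    unfolding kernel_split by (rule norm_triangle_ineq)
  show ?thesis
  proof (cases "\<bar>N * x\<bar> < 1")
    case True
    then show ?thesis using tri JB0[of x t] JB0[of "-x" "-t"] unfolding bbg_def by simp
  next
    case False
    then have y: "N * \<bar>x\<bar> \<ge> 1" using Np by (simp add: abs_mult)
    have y': "N * \<bar>- x\<bar> \<ge> 1" using y by simp
    have "cmod (kernelK \<beta> \<gamma> N x t) \<le> C1g \<beta> \<gamma> * N / sqrt (N * \<bar>x\<bar>) + C1g \<beta> \<gamma> * N / sqrt (N * \<bar>x\<bar>)"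
    proof -
      have j2: "cmod (Jint \<beta> \<gamma> N (- x) (- t)) \<le> C1g \<beta> \<gamma> * N / sqrt (N * \<bar>x\<bar>)" using JB[OF y', of "-t"] by simp
      show ?thesis using tri JB[OF y, of t] j2 by linarith
    qed
    also have "\<dots> = N * bbg \<beta> \<gamma> (N * x)" unfolding bbg_def using False Np by (simp add: abs_mult)
    finally show ?thesis .
  qed
qed

lemma K_meas: "(\<lambda>t. kernelK \<beta> \<gamma> N x t) \<in> borel_measurable lborel"
  unfolding kernelK_def phase_def
  by measurable


end




lemma powr_tail:
  fixes e :: real assumes e: "e < -1"
  shows "(\<integral>\<^sup>+ y. ennreal (indicator {1..} y * y powr e) \<partial>lborel) = ennreal (- 1 / (e + 1))"
proof -
  have h: "((\<lambda>x. x powr e) has_integral (- (1 powr (e + 1)) / (e + 1))) {1..}"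
    by (rule has_integral_powr_to_inf[OF e zero_less_one])
  have one: "(1::real) powr (e + 1) = 1" by (rule powr_one_eq_one)
  have h': "((\<lambda>x. x powr e) has_integral (- 1 / (e + 1))) {1..}" using h unfolding one .
  have fe: "(\<lambda>y. indicator {1..} y * y powr e) = (\<lambda>y. if y \<in> {1..} then y powr e else 0)"
    by (rule ext) (simp add: indicator_def)
  have h2: "((\<lambda>y. indicator {1..} y * y powr e) has_integral (- 1 / (e + 1))) UNIV"
    unfolding fe has_integral_restrict_UNIV by (rule h')
  have m: "(\<lambda>y. indicator {1..} y * y powr e) \<in> borel_measurable borel" by measurable
  have nn: "\<And>y. 0 \<le> indicator {1..} y * y powr e" by (simp add: indicator_def)
  show ?thesis
    by (rule nn_integral_has_integral_lborel[OF m nn h2])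
qed

lemma bb_meas: "(\<lambda>y. ennreal (bbg \<beta> \<gamma> y powr q)) \<in> borel_measurable borel"
  unfolding bbg_def by measurable

lemma bb_int:
  assumes b: "\<beta> < 0" and g: "\<gamma> > 0" and q: "q > 2"
  shows "(\<integral>\<^sup>+ y. ennreal (bbg \<beta> \<gamma> y powr q) \<partial>lborel) < \<infinity>"
proof -
  define e where "e = - q / 2"
  have e: "e < -1" unfolding e_def using q by simp
  define D where "D = (2 * C1g \<beta> \<gamma>) powr q"
  define f2 where "f2 y = ennreal D * ennreal (indicator {1..} y * y powr e)" for y
  define f1 where "f1 y = ennreal (6 powr q) * indicator {-1..1} y" for y :: real
  have C1p: "C1g \<beta> \<gamma> \<ge> 0"
  proof -
    have "2 * MM \<beta> \<gamma> / c0 \<beta> \<gamma> > 0" using c0_pos[OF b g] g unfolding MM_def by simp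
    then show ?thesis unfolding C1g_def by simp
  qed
  have pt: "ennreal (bbg \<beta> \<gamma> y powr q) \<le> f1 y + f2 y + f2 (- y)" for y
  proof (cases "\<bar>y\<bar> < 1")
    case True
    have e1: "ennreal (bbg \<beta> \<gamma> y powr q) = f1 y" using True unfolding bbg_def f1_def by (auto simp: indicator_def)
    have "f1 y \<le> f1 y + (f2 y + f2 (- y))" by (rule le_iff_add[THEN iffD2]) blast
    then show ?thesis unfolding e1 by (simp add: add.assoc)
  next
    case False
    have ay: "\<bar>y\<bar> \<ge> 1" using False by simp
    have "bbg \<beta> \<gamma> y powr q = D * \<bar>y\<bar> powr e"
    proof -
      have "bbg \<beta> \<gamma> y powr q = (2 * C1g \<beta> \<gamma>) powr q / sqrt \<bar>y\<bar> powr q"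
        unfolding bbg_def using False by (simp add: powr_divide)
      also have "sqrt \<bar>y\<bar> powr q = \<bar>y\<bar> powr (q/2)"
        by (simp add: powr_half_sqrt[symmetric] powr_powr)
      also have "1 / \<bar>y\<bar> powr (q/2) = \<bar>y\<bar> powr e" unfolding e_def by (simp add: powr_minus_divide)
      ultimately show ?thesis unfolding D_def by (metis times_divide_eq_right mult_1_right)
    qed
    moreover have "ennreal (D * \<bar>y\<bar> powr e) \<le> f2 y + f2 (- y)"
    proof (cases "y \<ge> 1")
      case True
      then show ?thesis unfolding f2_def by (simp add: ennreal_mult'[symmetric] D_def)
    next
      case False
      then have "- y \<ge> 1" using ay by simp
      then show ?thesis unfolding f2_def using False by (simp add: ennreal_mult'[symmetric] D_def)
    qed
    moreover have "f2 y + f2 (- y) \<le> f1 y + (f2 y + f2 (- y))" by (rule le_iff_add[THEN iffD2]) (metis add.commute)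
    ultimately have "ennreal (bbg \<beta> \<gamma> y powr q) \<le> f1 y + (f2 y + f2 (- y))" by (metis order_trans)
    then show ?thesis by (simp add: add.assoc)
  qed
  have m1: "f1 \<in> borel_measurable borel" unfolding f1_def by measurable
  have m2: "f2 \<in> borel_measurable borel" unfolding f2_def by measurable
  have m3: "(\<lambda>y. f2 (- y)) \<in> borel_measurable borel" using m2 by measurable
  have "(\<integral>\<^sup>+ y. ennreal (bbg \<beta> \<gamma> y powr q) \<partial>lborel) \<le> (\<integral>\<^sup>+ y. f1 y + f2 y + f2 (- y) \<partial>lborel)"
    by (rule nn_integral_mono) (rule pt)
  also have "\<dots> = integral\<^sup>N lborel f1 + integral\<^sup>N lborel f2 + (\<integral>\<^sup>+ y. f2 (- y) \<partial>lborel)"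
    using m1 m2 m3 by (simp add: nn_integral_add)
  also have "(\<integral>\<^sup>+ y. f2 (- y) \<partial>lborel) = integral\<^sup>N lborel f2"
    using nn_integral_real_affine[OF m2, of "-1" 0] by simp
  also have "integral\<^sup>N lborel f1 = ennreal (6 powr q) * 2"
    unfolding f1_def by (simp add: nn_integral_cmult_indicator)
  also have "integral\<^sup>N lborel f2 = ennreal D * ennreal (- 1 / (e + 1))"
    unfolding f2_def by (simp add: nn_integral_cmult powr_tail[OF e])
  finally have le: "(\<integral>\<^sup>+ y. ennreal (bbg \<beta> \<gamma> y powr q) \<partial>lborel) \<le> ennreal (6 powr q) * 2 + ennreal D * ennreal (- 1 / (e + 1)) + ennreal D * ennreal (- 1 / (e + 1))" .
  have "ennreal (6 powr q) * 2 + ennreal D * ennreal (- 1 / (e + 1)) + ennreal D * ennreal (- 1 / (e + 1)) < \<infinity>"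
    by (simp add: ennreal_mult_less_top)
  then show ?thesis using le by (rule le_less_trans[rotated])
qed




lemma (in setting) L_bounds:
  shows "Linf_t (kernelK \<beta> \<gamma> N) x \<le> ereal (N * bbg \<beta> \<gamma> (N * x))"
    and "0 \<le> Linf_t (kernelK \<beta> \<gamma> N) x"
proof -
  have m: "(\<lambda>t. ereal (cmod (kernelK \<beta> \<gamma> N x t))) \<in> borel_measurable lborel"
    using K_meas[of x] by measurable
  show "Linf_t (kernelK \<beta> \<gamma> N) x \<le> ereal (N * bbg \<beta> \<gamma> (N * x))"
    unfolding Linf_t_def
    by (rule esssup_I[OF m]) (use K_bound in auto)
  have "esssup lborel (\<lambda>t::real. (0::ereal)) \<le> esssup lborel (\<lambda>t. ereal (cmod (kernelK \<beta> \<gamma> N x t)))"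
    by (rule esssup_mono[where f="\<lambda>t. 0" and g="\<lambda>t. ereal (cmod (kernelK \<beta> \<gamma> N x t))"]) auto
  moreover have "esssup lborel (\<lambda>t::real. (0::ereal)) = 0" by (rule esssup_const) simp
  ultimately show "0 \<le> Linf_t (kernelK \<beta> \<gamma> N) x" unfolding Linf_t_def by simp
qed

lemma (in setting) L_real:
  shows "0 \<le> real_of_ereal (Linf_t (kernelK \<beta> \<gamma> N) x)"
    and "real_of_ereal (Linf_t (kernelK \<beta> \<gamma> N) x) \<le> N * bbg \<beta> \<gamma> (N * x)"
    and "Linf_t (kernelK \<beta> \<gamma> N) x < \<infinity>"
proof -
  have u: "Linf_t (kernelK \<beta> \<gamma> N) x \<le> ereal (N * bbg \<beta> \<gamma> (N * x))" and l: "0 \<le> Linf_t (kernelK \<beta> \<gamma> N) x"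
    using L_bounds by auto
  obtain r where r: "Linf_t (kernelK \<beta> \<gamma> N) x = ereal r"
    using u l by (cases "Linf_t (kernelK \<beta> \<gamma> N) x") auto
  show "0 \<le> real_of_ereal (Linf_t (kernelK \<beta> \<gamma> N) x)" using l r by simp
  show "real_of_ereal (Linf_t (kernelK \<beta> \<gamma> N) x) \<le> N * bbg \<beta> \<gamma> (N * x)" using u r by simp
  show "Linf_t (kernelK \<beta> \<gamma> N) x < \<infinity>" using r by simp
qed

lemma (in setting) integral_bound:
  assumes q: "q > 2"
  shows "(\<integral>\<^sup>+ x. ennreal (real_of_ereal (Linf_t (kernelK \<beta> \<gamma> N) x) powr q) \<partial>lborel)
     \<le> ennreal (N powr (q - 1) * enn2real (\<integral>\<^sup>+ y. ennreal (bbg \<beta> \<gamma> y powr q) \<partial>lborel))"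
proof -
  define Cb where "Cb = enn2real (\<integral>\<^sup>+ y. ennreal (bbg \<beta> \<gamma> y powr q) \<partial>lborel)"
  have fin: "(\<integral>\<^sup>+ y. ennreal (bbg \<beta> \<gamma> y powr q) \<partial>lborel) < \<infinity>" by (rule bb_int[OF b g q])
  have Cbe: "(\<integral>\<^sup>+ y. ennreal (bbg \<beta> \<gamma> y powr q) \<partial>lborel) = ennreal Cb"
    unfolding Cb_def using fin by simp
  have Np: "N > 0" using N1 by simp
  define X where "X = (\<integral>\<^sup>+ x. ennreal (bbg \<beta> \<gamma> (N * x) powr q) \<partial>lborel)"
  have sc: "ennreal Cb = ennreal N * X"
    unfolding Cbe[symmetric] X_def
    using nn_integral_real_affine[OF bb_meas[where \<beta>=\<beta> and \<gamma>=\<gamma> and q=q], of N 0] Np by simp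
  have mX: "(\<lambda>x. ennreal (bbg \<beta> \<gamma> (N * x) powr q)) \<in> borel_measurable lborel"
    unfolding bbg_def by measurable
  have "(\<integral>\<^sup>+ x. ennreal (real_of_ereal (Linf_t (kernelK \<beta> \<gamma> N) x) powr q) \<partial>lborel)
      \<le> (\<integral>\<^sup>+ x. ennreal (N powr q) * ennreal (bbg \<beta> \<gamma> (N * x) powr q) \<partial>lborel)"
  proof (rule nn_integral_mono)
    fix x
    have "real_of_ereal (Linf_t (kernelK \<beta> \<gamma> N) x) powr q \<le> (N * bbg \<beta> \<gamma> (N * x)) powr q"
      by (rule powr_mono2) (use q L_real[of x] in auto)
    also have "\<dots> = N powr q * bbg \<beta> \<gamma> (N * x) powr q" by (rule powr_mult)
    finally show "ennreal (real_of_ereal (Linf_t (kernelK \<beta> \<gamma> N) x) powr q) \<le> ennreal (N powr q) * ennreal (bbg \<beta> \<gamma> (N * x) powr q)"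
      by (simp add: ennreal_mult[symmetric] ennreal_leI)
  qed
  also have "\<dots> = ennreal (N powr q) * X" unfolding X_def by (rule nn_integral_cmult[OF mX])
  also have "ennreal (N powr q) = ennreal (N powr (q - 1)) * ennreal N"
  proof -
    have "N powr q = N powr (q - 1) * N" using Np by (simp add: powr_diff)
    then have "ennreal (N powr q) = ennreal (N powr (q - 1) * N)" by simp
    also have "\<dots> = ennreal (N powr (q - 1)) * ennreal N" by (rule ennreal_mult) (use Np in auto)
    finally show ?thesis .
  qed
  also have "ennreal (N powr (q - 1)) * ennreal N * X = ennreal (N powr (q - 1)) * ennreal Cb"
    unfolding sc by (simp add: mult.assoc)
  also have "\<dots> = ennreal (N powr (q - 1) * Cb)" by (simp add: ennreal_mult[symmetric] Cb_def)
  finally show ?thesis unfolding Cb_def .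
qed

theorem lemma2p8:
  fixes \<beta> \<gamma> p :: real
  assumes "\<beta> < 0" and "\<gamma> > 0" and "p \<ge> 7"
  shows "\<exists>C::real. \<forall>N::real. (\<exists>k::int. N = 2 powr (real_of_int k)) \<and> N \<ge> a_const \<beta> \<gamma> \<longrightarrow>
           norm_Lr_Linf (p/2) (kernelK \<beta> \<gamma> N) \<le> ereal (C * N powr ((p-2)/p))"
proof -
  define q where "q = p / 2"
  have q: "q > 2" unfolding q_def using assms(3) by simp
  define Cb where "Cb = enn2real (\<integral>\<^sup>+ y. ennreal (bbg \<beta> \<gamma> y powr q) \<partial>lborel)"
  have Cb0: "Cb \<ge> 0" unfolding Cb_def by simp
  show ?thesis
  proof (intro exI allI impI)
    fix N :: real
    assume "(\<exists>k::int. N = 2 powr (real_of_int k)) \<and> N \<ge> a_const \<beta> \<gamma>"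
    then have NA: "N \<ge> a_const \<beta> \<gamma>" by simp
    interpret setting \<beta> \<gamma> N using assms NA by unfold_locales auto
    have Np: "N > 0" using N1 by simp
    define I where "I = (\<integral>\<^sup>+ x. ennreal (real_of_ereal (Linf_t (kernelK \<beta> \<gamma> N) x) powr q) \<partial>lborel)"
    have Ile: "I \<le> ennreal (N powr (q - 1) * Cb)" unfolding I_def Cb_def by (rule integral_bound[OF q])
    have Ifin: "I < \<infinity>" using Ile by (rule le_less_trans) simp
    have AE: "AE x in lborel. Linf_t (kernelK \<beta> \<gamma> N) x < \<infinity>" using L_real(3) by simp
    have val: "norm_Lr_Linf (p/2) (kernelK \<beta> \<gamma> N) = ereal ((enn2real I) powr (1/q))"
      unfolding norm_Lr_Linf_def q_def[symmetric] I_def[symmetric] using AE Ifin by simp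
    have e1: "enn2real I \<le> N powr (q - 1) * Cb"
      using enn2real_mono[OF Ile] Cb0 by simp
    have "(enn2real I) powr (1/q) \<le> (N powr (q - 1) * Cb) powr (1/q)"
      by (rule powr_mono2) (use q e1 in auto)
    also have "\<dots> = Cb powr (1/q) * N powr ((p-2)/p)"
    proof -
      have "(N powr (q - 1) * Cb) powr (1/q) = (N powr (q - 1)) powr (1/q) * Cb powr (1/q)" by (rule powr_mult)
      also have "(N powr (q - 1)) powr (1/q) = N powr ((q - 1) * (1/q))" by (rule powr_powr)
      also have "(q - 1) * (1/q) = (p-2)/p" unfolding q_def using assms(3) by (simp add: field_simps)
      finally show ?thesis by simp
    qed
    finally show "norm_Lr_Linf (p/2) (kernelK \<beta> \<gamma> N) \<le> ereal (Cb powr (1/q) * N powr ((p-2)/p))"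
      unfolding val by simp
  qed
qed


end
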